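(* Let $R$ be a ring with unity and involution $*$, and let $a,b,c\in R$. The following statements are equivalent. (1) $a$ is left dual $(b,c)$-core invertible. (2) $b\in b(cab)^*R$. (3) $b\in Rcab\cap bb^*R$. (4) There exists some $x\in Rc$ such that $b(xab)^n=b$ and $((xab)^n)^*=(xab)^n$ for every positive integer $n$. (5) There exists some $x\in Rc$ such that $b(xab)^n=b$ and $((xab)^n)^*=(xab)^n$ for some positive integer $n$.
   Context: An element $a\in R$ is called left dual $(b,c)$-core invertible if there exists $x\in Rc$ such that $bxab=b$ and $(xab)^*=xab$; such an $x$ is called a left dual $(b,c)$-core inverse of $a$. *)

theory Defs
  imports Main
begin

class involution_ring = ring_1 +
  fixes invol :: "'a \<Rightarrow> 'a"  ("_\<^sup>\<star>" [1000] 999)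
  assumes invol_add: "(x + y)\<^sup>\<star> = x\<^sup>\<star> + y\<^sup>\<star>"
    and invol_mult: "(x * y)\<^sup>\<star> = y\<^sup>\<star> * x\<^sup>\<star>"
    and invol_invol: "(x\<^sup>\<star>)\<^sup>\<star> = x"

definition left_dual_bc_core_inverse :: "'a::involution_ring \<Rightarrow> 'a \<Rightarrow> 'a \<Rightarrow> 'a \<Rightarrow> bool" where
  "left_dual_bc_core_inverse a b c x \<longleftrightarrow>
     (\<exists>r. x = r * c) \<and> b * x * a * b = b \<and> (x * a * b)\<^sup>\<star> = x * a * b"

definition left_dual_bc_core_invertible :: "'a::involution_ring \<Rightarrow> 'a \<Rightarrow> 'a \<Rightarrow> bool" where
  "left_dual_bc_core_invertible a b c \<longleftrightarrow> (\<exists>x. left_dual_bc_core_inverse a b c x)"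

end

theory Submission
  imports Defs
begin

lemma idem_pow: "(e::'a::ring_1) * e = e \<Longrightarrow> n \<ge> 1 \<Longrightarrow> e ^ n = e"
proof (induction n)
  case 0 then show ?case by simp
next
  case (Suc m)
  show ?case
  proof (cases "m = 0")
    case True then show ?thesis by simp
  next
    case False then have "e ^ m = e" using Suc by simp
    then show ?thesis using Suc.prems(1) by (simp add: power_Suc2)
  qed
qed

lemma s12:
  fixes a b c :: "'a::involution_ring"
  assumes "left_dual_bc_core_invertible a b c"
  shows "\<exists>r. b = b * (c * a * b)\<^sup>\<star> * r"
proof -
  obtain x r where x: "x = r * c" "b * x * a * b = b" "(x * a * b)\<^sup>\<star> = x * a * b"
    using assms unfolding left_dual_bc_core_invertible_def left_dual_bc_core_inverse_def by blast
  have "b = b * (x * a * b)\<^sup>\<star>" using x by (simp add: mult.assoc)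
  also have "(x * a * b)\<^sup>\<star> = (c * a * b)\<^sup>\<star> * r\<^sup>\<star>"
    using x(1) by (simp add: invol_mult mult.assoc)
  finally show ?thesis by (metis mult.assoc)
qed

lemma s23:
  fixes a b c :: "'a::involution_ring"
  assumes "\<exists>r. b = b * (c * a * b)\<^sup>\<star> * r"
  shows "(\<exists>s. b = s * c * a * b) \<and> (\<exists>t. b = b * b\<^sup>\<star> * t)"
proof -
  obtain r where r: "b = b * (c * a * b)\<^sup>\<star> * r" using assms by blast
  define t where "t = a\<^sup>\<star> * c\<^sup>\<star> * r"
  have bt: "b = b * b\<^sup>\<star> * t" using r unfolding t_def by (simp add: invol_mult mult.assoc)
  define g where "g = t\<^sup>\<star> * b"
  have "g * g\<^sup>\<star> = t\<^sup>\<star> * (b * b\<^sup>\<star> * t)" unfolding g_def by (simp add: invol_mult invol_invol mult.assoc)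
  then have gg: "g * g\<^sup>\<star> = g" using bt g_def by simp
  then have "g\<^sup>\<star> = g" by (metis invol_mult invol_invol)
  then have "b = b * g" using bt unfolding g_def by (simp add: invol_mult invol_invol mult.assoc)
  then have "b = (b * r\<^sup>\<star>) * c * a * b" unfolding g_def t_def by (simp add: invol_mult invol_invol mult.assoc)
  then show ?thesis using bt by blast
qed

lemma s34:
  fixes a b c :: "'a::involution_ring"
  assumes "(\<exists>s. b = s * c * a * b) \<and> (\<exists>t. b = b * b\<^sup>\<star> * t)"
  shows "\<exists>x. (\<exists>r. x = r * c) \<and>
          (\<forall>n::nat. n \<ge> 1 \<longrightarrow> b * (x * a * b) ^ n = b \<and> ((x * a * b) ^ n)\<^sup>\<star> = (x * a * b) ^ n)"
proof -
  obtain s t where s: "b = s * c * a * b" and bt: "b = b * b\<^sup>\<star> * t" using assms by blast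
  define g where "g = t\<^sup>\<star> * b"
  have "g * g\<^sup>\<star> = t\<^sup>\<star> * (b * b\<^sup>\<star> * t)" unfolding g_def by (simp add: invol_mult invol_invol mult.assoc)
  then have gg: "g * g\<^sup>\<star> = g" using bt g_def by simp
  then have gh: "g\<^sup>\<star> = g" by (metis invol_mult invol_invol)
  then have bg: "b = b * g" using bt unfolding g_def by (simp add: invol_mult invol_invol mult.assoc)
  have gi: "g * g = g" using bg unfolding g_def by (metis mult.assoc)
  define x where "x = t\<^sup>\<star> * s * c"
  have xg: "x * a * b = g" unfolding x_def g_def using s by (metis mult.assoc)
  have "\<forall>n::nat. n \<ge> 1 \<longrightarrow> b * (x * a * b) ^ n = b \<and> ((x * a * b) ^ n)\<^sup>\<star> = (x * a * b) ^ n"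
    using idem_pow[OF gi] xg gh bg by simp
  then show ?thesis unfolding x_def by blast
qed

lemma s52:
  fixes a b c :: "'a::involution_ring"
  assumes "\<exists>x. (\<exists>r. x = r * c) \<and>
          (\<exists>n::nat. n \<ge> 1 \<and> b * (x * a * b) ^ n = b \<and> ((x * a * b) ^ n)\<^sup>\<star> = (x * a * b) ^ n)"
  shows "\<exists>r. b = b * (c * a * b)\<^sup>\<star> * r"
proof -
  obtain x r n where x: "x = r * c" "n \<ge> 1" "b * (x * a * b) ^ n = b"
     "((x * a * b) ^ n)\<^sup>\<star> = (x * a * b) ^ n" using assms by blast
  obtain m where m: "n = Suc m" using x(2) by (cases n) auto
  define y where "y = (x * a * b) ^ m * r"
  have e0: "(x * a * b) ^ n = (x * a * b) ^ m * (x * a * b)" unfolding m by (rule power_Suc2)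
  have e: "(x * a * b) ^ n = y * (c * a * b)" unfolding y_def using e0 x(1)
    by (simp add: mult.assoc)
  have "b = b * ((x * a * b) ^ n)\<^sup>\<star>" using x by simp
  also have "\<dots> = b * (c * a * b)\<^sup>\<star> * y\<^sup>\<star>" using e by (simp add: invol_mult mult.assoc)
  finally show ?thesis by blast
qed

lemma s31:
  fixes a b c :: "'a::involution_ring"
  assumes "(\<exists>s. b = s * c * a * b) \<and> (\<exists>t. b = b * b\<^sup>\<star> * t)"
  shows "left_dual_bc_core_invertible a b c"
proof -
  obtain x r where x: "x = r * c" and
    h: "\<forall>n::nat. n \<ge> 1 \<longrightarrow> b * (x * a * b) ^ n = b \<and> ((x * a * b) ^ n)\<^sup>\<star> = (x * a * b) ^ n"
    using s34[OF assms] by blast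
  from h[rule_format, of 1] have "b * (x * a * b) = b" "(x * a * b)\<^sup>\<star> = x * a * b" by auto
  then show ?thesis unfolding left_dual_bc_core_invertible_def left_dual_bc_core_inverse_def
    using x by (metis mult.assoc)
qed

theorem theorem2p4:
  fixes a b c :: "'a::involution_ring"
  shows
   "(left_dual_bc_core_invertible a b c \<longleftrightarrow> (\<exists>r. b = b * (c * a * b)\<^sup>\<star> * r))
  \<and> ((\<exists>r. b = b * (c * a * b)\<^sup>\<star> * r) \<longleftrightarrow>
       ((\<exists>s. b = s * c * a * b) \<and> (\<exists>t. b = b * b\<^sup>\<star> * t)))
  \<and> (((\<exists>s. b = s * c * a * b) \<and> (\<exists>t. b = b * b\<^sup>\<star> * t)) \<longleftrightarrow>
       (\<exists>x. (\<exists>r. x = r * c) \<and>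
          (\<forall>n::nat. n \<ge> 1 \<longrightarrow> b * (x * a * b) ^ n = b \<and> ((x * a * b) ^ n)\<^sup>\<star> = (x * a * b) ^ n)))
  \<and> ((\<exists>x. (\<exists>r. x = r * c) \<and>
          (\<forall>n::nat. n \<ge> 1 \<longrightarrow> b * (x * a * b) ^ n = b \<and> ((x * a * b) ^ n)\<^sup>\<star> = (x * a * b) ^ n))
     \<longleftrightarrow>
      (\<exists>x. (\<exists>r. x = r * c) \<and>
          (\<exists>n::nat. n \<ge> 1 \<and> b * (x * a * b) ^ n = b \<and> ((x * a * b) ^ n)\<^sup>\<star> = (x * a * b) ^ n)))"
proof -
  let ?P1 = "left_dual_bc_core_invertible a b c"
  let ?P2 = "\<exists>r. b = b * (c * a * b)\<^sup>\<star> * r"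
  let ?P3 = "(\<exists>s. b = s * c * a * b) \<and> (\<exists>t. b = b * b\<^sup>\<star> * t)"
  let ?P4 = "\<exists>x. (\<exists>r. x = r * c) \<and>
          (\<forall>n::nat. n \<ge> 1 \<longrightarrow> b * (x * a * b) ^ n = b \<and> ((x * a * b) ^ n)\<^sup>\<star> = (x * a * b) ^ n)"
  let ?P5 = "\<exists>x. (\<exists>r. x = r * c) \<and>
          (\<exists>n::nat. n \<ge> 1 \<and> b * (x * a * b) ^ n = b \<and> ((x * a * b) ^ n)\<^sup>\<star> = (x * a * b) ^ n)"
  have i12: "?P1 \<Longrightarrow> ?P2" by (rule s12)
  have i23: "?P2 \<Longrightarrow> ?P3" by (rule s23)
  have i34: "?P3 \<Longrightarrow> ?P4" by (rule s34)
  have i31: "?P3 \<Longrightarrow> ?P1" by (rule s31)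
  have i52: "?P5 \<Longrightarrow> ?P2" by (rule s52)
  have i45: "?P4 \<Longrightarrow> ?P5"
  proof -
    assume "?P4"
    then obtain x where xr: "\<exists>r. x = r * c" and
      h: "\<forall>n::nat. n \<ge> 1 \<longrightarrow> b * (x * a * b) ^ n = b \<and> ((x * a * b) ^ n)\<^sup>\<star> = (x * a * b) ^ n"
      by blast
    have "\<exists>n::nat. n \<ge> 1 \<and> b * (x * a * b) ^ n = b \<and> ((x * a * b) ^ n)\<^sup>\<star> = (x * a * b) ^ n"
      using h by blast
    then show ?P5 using \<open>\<exists>r. x = r * c\<close> by blast
  qed
  have e1: "?P1 = ?P2" using i12 i23 i31 by blast
  have e2: "?P2 = ?P3" using i23 i31 i12 by blast
  have e3: "?P3 = ?P4" using i34 i45 i52 i23 by blast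
  have e4: "?P4 = ?P5" using i45 i52 i23 i34 by blast
  show ?thesis using e1 e2 e3 e4 by blast
qed

end
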